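(* Consider the two-type Bellman–Harris process described in the context. Let $H(t),k_1(t),k_2(t)$ be nonnegative functions on $[0,\infty)$ with $\lim_{t\to\infty}k_i(t)=0$ ($i=1,2$) and $\lim_{t\to\infty}H(t)=\infty$. (a) If there exist functions $k_i(t,\lambda_i)$, $i=1,2$, with $k_i(t,\lambda_i)\sim\lambda_ik_i(t)$ as $t\to\infty$ for every fixed $\lambda_i>0$, and $$\lim_{t\to\infty}H(t)\mathbf{Q}(t;1-k_1(t,\lambda_1),1-k_2(t,\lambda_2))=\mathbf{h}(\lambda_1,\lambda_2),\quad\lambda_1,\lambda_2>0,$$ for a function $\mathbf{h}=(h_1,h_2)$ with components continuous in both arguments, then $$\lim_{t\to\infty}H(t)\mathbf{Q}(t;e^{-\lambda_1k_1(t)},e^{-\lambda_2k_2(t)})=\mathbf{h}(\lambda_1,\lambda_2),\quad\lambda_1,\lambda_2>0.$$ (b) If $\lim_{t\to\infty}H(t)\mathbf{Q}(t;1,1-k_2(t,\lambda_2))=\mathbf{h}(\lambda_2)$ for $\lambda_2>0$, for a function $\mathbf{h}(\lambda_2)=(h_1(\lambda_2),h_2(\lambda_2))$ with continuous components (and $k_2(t,\lambda_2)\sim\lambda_2k_2(t)$ for each fixed $\lambda_2>0$), then $\lim_{t\to\infty}H(t)\mathbf{Q}(t;1,e^{-\lambda_2k_2(t)})=\mathbf{h}(\lambda_2)$ for $\lambda_2>0$.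
   Context: Two-type Bellman–Harris branching process $\mathbf{Z}(t)=(Z_1(t),Z_2(t))$ (particles of type $i\in\{1,2\}$ have life-length distribution $G_i$ and offspring generating function $f_i(s_1,s_2)$, and evolve independently). For $\mathbf{s}=(s_1,s_2)\in[0,1]^2$, $F_i(t;\mathbf{s})=\mathbf{E}[s_1^{Z_1(t)}s_2^{Z_2(t)}\mid\text{one initial particle of type }i]$ and $\mathbf{Q}(t;\mathbf{s})=(1-F_1(t;\mathbf{s}),1-F_2(t;\mathbf{s}))^\dagger$. *)

theory Defs
  imports "HOL-Probability.Probability" "HOL-Library.Landau_Symbols"
begin

definition pgf2 :: "(nat \<times> nat) pmf \<Rightarrow> real \<Rightarrow> real \<Rightarrow> real" where
  "pgf2 p s1 s2 = measure_pmf.expectation p (\<lambda>(a, b). s1 ^ a * s2 ^ b)"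

text \<open>Z i t is the law of (Z1(t), Z2(t)) started from one
  particle of type i (i = 1, 2); G i is the life-length distribution of type i (a probability
  measure on [0,\<infinity>)); xi i is the offspring law of type i, with generating function
  f_i = pgf2 (xi i).  The process is characterised by the Bellman--Harris integral equation
  F_i(t;s) = s_i (1 - G_i(t)) + \<integral>_0^t f_i(F(t-u;s)) dG_i(u).\<close>
definition bellman_harris ::
  "(nat \<Rightarrow> real measure) \<Rightarrow> (nat \<Rightarrow> (nat \<times> nat) pmf) \<Rightarrow> (nat \<Rightarrow> real \<Rightarrow> (nat \<times> nat) pmf) \<Rightarrow> bool" where
  "bellman_harris G xi Z \<longleftrightarrow>
     (\<forall>i\<in>{1,2}. prob_space (G i) \<and> sets (G i) = sets borel \<and> measure (G i) {..<0} = 0 \<and>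
       (\<forall>t\<ge>0. \<forall>s1\<in>{0..1}. \<forall>s2\<in>{0..1}.
          set_integrable (G i) {0..t}
            (\<lambda>u. pgf2 (xi i) (pgf2 (Z 1 (t - u)) s1 s2) (pgf2 (Z 2 (t - u)) s1 s2)) \<and>
          pgf2 (Z i t) s1 s2 =
            (if i = 1 then s1 else s2) * measure (G i) {t<..} +
            (LINT u:{0..t}|G i. pgf2 (xi i) (pgf2 (Z 1 (t - u)) s1 s2) (pgf2 (Z 2 (t - u)) s1 s2))))"

definition Qv :: "(nat \<Rightarrow> real \<Rightarrow> (nat \<times> nat) pmf) \<Rightarrow> real \<Rightarrow> real \<Rightarrow> real \<Rightarrow> real \<times> real" where
  "Qv Z t s1 s2 = (1 - pgf2 (Z 1 t) s1 s2, 1 - pgf2 (Z 2 t) s1 s2)"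

end

theory Submission
  imports Defs
begin



lemma pgf2_mono:
  assumes "0 \<le> s1" "s1 \<le> s1'" "s1' \<le> 1" "0 \<le> s2" "s2 \<le> s2'" "s2' \<le> 1"
  shows "pgf2 p s1 s2 \<le> pgf2 p s1' s2'"
  unfolding pgf2_def
proof (rule integral_mono)
  have b: "norm (s1 ^ a * s2 ^ (b::nat)) \<le> (1::real)"
    if h: "0 \<le> s1" "s1 \<le> 1" "0 \<le> s2" "s2 \<le> 1" for s1 s2 :: real and a b :: nat
  proof -
    have "s1 ^ a \<le> 1" "s2 ^ b \<le> 1" using h by (auto intro: power_le_one)
    moreover have "0 \<le> s1 ^ a" "0 \<le> s2 ^ b" using h by auto
    ultimately show ?thesis
      by (simp add: abs_mult mult_le_one)
  qed
  show "integrable (measure_pmf p) (\<lambda>(a, b). s1 ^ a * s2 ^ b)"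
    by (rule measure_pmf.integrable_const_bound[where B=1]) (use assms b in \<open>auto intro!: AE_I2 split: prod.splits\<close>)
  show "integrable (measure_pmf p) (\<lambda>(a, b). s1' ^ a * s2' ^ b)"
    by (rule measure_pmf.integrable_const_bound[where B=1]) (use assms b in \<open>auto intro!: AE_I2 split: prod.splits\<close>)
  fix x :: "nat \<times> nat"
  show "(case x of (a, b) \<Rightarrow> s1 ^ a * s2 ^ b) \<le> (case x of (a, b) \<Rightarrow> s1' ^ a * s2' ^ b)"
    using assms by (cases x) (auto intro!: mult_mono power_mono)
qed

lemma exp_bounds:
  fixes x :: real assumes "0 \<le> x"
  shows "1 - exp (- x) \<le> x" "x - x^2 \<le> 1 - exp (- x)"
proof -
  show "1 - exp (- x) \<le> x" using exp_ge_add_one_self[of "-x"] by simp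
  have "1 + x \<le> exp x" by (rule exp_ge_add_one_self)
  hence "exp (-x) \<le> 1 / (1 + x)" using assms by (simp add: exp_minus divide_simps)
  moreover have "x - x^2 \<le> 1 - 1/(1+x)" using assms
    by (simp add: field_simps power2_eq_square)
  ultimately show "x - x^2 \<le> 1 - exp (- x)" by simp
qed

lemma cont_pt:
  fixes f :: "real \<Rightarrow> real"
  assumes "continuous_on {0<..} f" "x > 0" "e > 0"
  shows "\<exists>d. 0 < d \<and> d \<le> 1/2 \<and> \<bar>f (x*(1-d)) - f x\<bar> < e \<and> \<bar>f (x*(1+d)) - f x\<bar> < e"
proof -
  from assms(1) have "\<exists>d>0. \<forall>x'\<in>{0<..}. dist x' x < d \<longrightarrow> dist (f x') (f x) < e"
    using assms(2,3) unfolding continuous_on_iff by auto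
  then obtain d where d: "d > 0" "\<And>x'. x' > 0 \<Longrightarrow> \<bar>x' - x\<bar> < d \<Longrightarrow> \<bar>f x' - f x\<bar> < e"
    by (auto simp: dist_real_def)
  define d' where "d' = min (1/2) (d / (2*x))"
  have d'0: "d' > 0" "d' \<le> 1/2" using d assms by (auto simp: d'_def)
  have "x * d' \<le> x * (d/(2*x))" using assms(2) by (intro mult_left_mono) (auto simp: d'_def)
  also have "\<dots> = d/2" using assms(2) by simp
  finally have xd: "x * d' < d" using d by simp
  have "\<bar>f (x*(1-d')) - f x\<bar> < e"
    using xd d'0 assms(2) by (intro d(2)) (auto simp: algebra_simps)
  moreover have "\<bar>f (x*(1+d')) - f x\<bar> < e"
    using xd d'0 assms(2) by (intro d(2)) (auto simp: algebra_simps intro: add_pos_nonneg)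
  ultimately show ?thesis using d'0 by blast
qed

lemma bracket:
  fixes kk :: "real \<Rightarrow> real \<Rightarrow> real" and k :: "real \<Rightarrow> real"
  assumes eq: "\<forall>mu>0. (\<lambda>t. kk mu t) \<sim>[at_top] (\<lambda>t. mu * k t)"
    and kl: "(k \<longlongrightarrow> 0) at_top" and kn: "eventually (\<lambda>t. k t \<ge> 0) at_top"
    and lam: "lam > 0" and dl: "0 < d" "d \<le> 1/2"
  shows "eventually (\<lambda>t. 0 \<le> kk (lam*(1+d)) t \<and> kk (lam*(1+d)) t \<le> 1 \<and>
      1 - kk (lam*(1+d)) t \<le> exp (- lam * k t) \<and> exp (- lam * k t) \<le> 1 - kk (lam*(1-d)) t \<and>
      0 \<le> kk (lam*(1-d)) t \<and> kk (lam*(1-d)) t \<le> 1) at_top"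
proof -
  define c where "c = d/2"
  have c: "c > 0" using dl by (simp add: c_def)
  have o1: "eventually (\<lambda>t. norm (kk (lam*(1+d)) t - lam*(1+d)*k t) \<le> c * norm (lam*(1+d)*k t)) at_top"
    using eq[rule_format, of "lam*(1+d)"] lam dl c
    by (intro landau_o.smallD) (auto simp: asymp_equiv_altdef)
  have o2: "eventually (\<lambda>t. norm (kk (lam*(1-d)) t - lam*(1-d)*k t) \<le> c * norm (lam*(1-d)*k t)) at_top"
    using eq[rule_format, of "lam*(1-d)"] lam dl c
    by (intro landau_o.smallD) (auto simp: asymp_equiv_altdef)
  have "((\<lambda>t. lam * k t) \<longlongrightarrow> lam * 0) at_top" by (intro tendsto_intros kl)
  hence small: "eventually (\<lambda>t. lam * k t < d/4) at_top"
    using dl by (intro order_tendstoD) auto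
  show ?thesis
    using o1 o2 small kn
  proof eventually_elim
    case (elim t)
    define x where "x = lam * k t"
    have x0: "x \<ge> 0" using elim lam by (simp add: x_def)
    have xs: "x < d/4" using elim by (simp add: x_def)
    have A: "\<bar>kk (lam*(1+d)) t - (1+d)*x\<bar> \<le> c * ((1+d)*x)"
      using elim(1) x0 dl by (simp add: x_def abs_mult algebra_simps)
    have "\<bar>lam*(1-d)*k t\<bar> = (1-d)*x" using x0 dl unfolding x_def by (subst abs_of_nonneg) (auto simp: algebra_simps intro: mult_left_le_one_le)
    hence B: "\<bar>kk (lam*(1-d)) t - (1-d)*x\<bar> \<le> c * ((1-d)*x)"
      using elim(2) by (simp add: x_def mult.assoc mult.left_commute)
    have e1: "1 - exp (- x) \<le> x" "x - x^2 \<le> 1 - exp (- x)" using exp_bounds x0 by auto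
    define P where "P = (1+d)*x"
    define M where "M = (1-d)*x"
    have f1: "P - c*P - x = x*(d*(1-d)/2)" by (simp add: P_def c_def field_simps)
    have "0 \<le> x*(d*(1-d)/2)" using x0 dl by simp
    hence g1: "x \<le> P - c*P" using f1 by linarith
    have f2: "x - x^2 - (M + c*M) = x*(d/2 + d*d/2 - x)" by (simp add: M_def c_def field_simps power2_eq_square)
    have "0 \<le> x*(d/2 + d*d/2 - x)" proof - have "0 \<le> d*d" by simp thus ?thesis using x0 dl xs by (intro mult_nonneg_nonneg) linarith+ qed
    hence g2: "M + c*M \<le> x - x^2" using f2 by linarith
    have f3: "P + c*P = x*((1+d)*(1+d/2))" by (simp add: P_def c_def algebra_simps)
    have "(1+d)*(1+d/2) \<le> 3/2 * (5/4)" using dl by (intro mult_mono) auto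
    hence "x*((1+d)*(1+d/2)) \<le> x * (15/8)" using x0 by (intro mult_left_mono) auto
    hence g3: "P + c*P \<le> 1" using f3 xs dl by linarith
    have "x^2 \<ge> 0" by simp
    hence g4: "M + c*M \<le> 1" using g2 xs dl by linarith
    have f5: "M - c*M = x*((1-d)*(1-d/2))" by (simp add: M_def c_def algebra_simps)
    have "0 \<le> x*((1-d)*(1-d/2))" using x0 dl by simp
    hence g5: "0 \<le> M - c*M" using f5 by linarith
    have cP: "0 \<le> c*P" using c x0 dl by (simp add: P_def)
    have "0 \<le> kk (lam*(1+d)) t \<and> kk (lam*(1+d)) t \<le> 1 \<and>
      1 - kk (lam*(1+d)) t \<le> exp (- x) \<and> exp (- x) \<le> 1 - kk (lam*(1-d)) t \<and>
      0 \<le> kk (lam*(1-d)) t \<and> kk (lam*(1-d)) t \<le> 1"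
      using A B e1 g1 g2 g3 g4 g5 cP x0 unfolding abs_le_iff P_def[symmetric] M_def[symmetric] by linarith
    thus ?case by (simp add: x_def)
  qed
qed



lemma sandwich2:
  fixes Phi :: "real \<Rightarrow> real \<Rightarrow> real \<Rightarrow> real" and phi :: "real \<Rightarrow> real \<Rightarrow> real"
    and kk1 kk2 :: "real \<Rightarrow> real \<Rightarrow> real" and k1 k2 :: "real \<Rightarrow> real"
  assumes mono: "eventually (\<lambda>t. \<forall>s1 s1' s2 s2'. 0 \<le> s1 \<longrightarrow> s1 \<le> s1' \<longrightarrow> s1' \<le> 1 \<longrightarrow>
        0 \<le> s2 \<longrightarrow> s2 \<le> s2' \<longrightarrow> s2' \<le> 1 \<longrightarrow> Phi t s1' s2' \<le> Phi t s1 s2) at_top"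
    and eq1: "\<forall>mu>0. (\<lambda>t. kk1 mu t) \<sim>[at_top] (\<lambda>t. mu * k1 t)"
    and eq2: "\<forall>mu>0. (\<lambda>t. kk2 mu t) \<sim>[at_top] (\<lambda>t. mu * k2 t)"
    and k1l: "(k1 \<longlongrightarrow> 0) at_top" and k2l: "(k2 \<longlongrightarrow> 0) at_top"
    and k1n: "eventually (\<lambda>t. k1 t \<ge> 0) at_top" and k2n: "eventually (\<lambda>t. k2 t \<ge> 0) at_top"
    and lim: "\<forall>mu1>0. \<forall>mu2>0. ((\<lambda>t. Phi t (1 - kk1 mu1 t) (1 - kk2 mu2 t)) \<longlongrightarrow> phi mu1 mu2) at_top"
    and c1: "\<forall>mu2>0. continuous_on {0<..} (\<lambda>mu1. phi mu1 mu2)"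
    and c2: "\<forall>mu1>0. continuous_on {0<..} (\<lambda>mu2. phi mu1 mu2)"
    and l1: "l1 > 0" and l2: "l2 > 0"
  shows "((\<lambda>t. Phi t (exp (- l1 * k1 t)) (exp (- l2 * k2 t))) \<longlongrightarrow> phi l1 l2) at_top"
proof (rule order_tendstoI)
  fix a assume a: "a < phi l1 l2"
  define e where "e = phi l1 l2 - a"
  have e: "e > 0" using a by (simp add: e_def)
  obtain d1 where d1: "0 < d1" "d1 \<le> 1/2" "\<bar>phi (l1*(1-d1)) l2 - phi l1 l2\<bar> < e/2"
    using cont_pt[OF c1[rule_format, OF l2] l1, of "e/2"] e by auto
  define m1 where "m1 = l1*(1-d1)"
  have m1: "m1 > 0" using l1 d1 by (simp add: m1_def)
  obtain d2 where d2: "0 < d2" "d2 \<le> 1/2" "\<bar>phi m1 (l2*(1-d2)) - phi m1 l2\<bar> < e/2"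
    using cont_pt[OF c2[rule_format, OF m1] l2, of "e/2"] e by auto
  have "a < phi m1 (l2*(1-d2))" using d1(3) d2(3) unfolding m1_def e_def abs_less_iff by argo
  moreover have "l2*(1-d2) > 0" using l2 d2 by simp
  ultimately have ev: "eventually (\<lambda>t. a < Phi t (1 - kk1 m1 t) (1 - kk2 (l2*(1-d2)) t)) at_top"
    using lim m1 by (intro order_tendstoD(1)) auto
  show "eventually (\<lambda>t. a < Phi t (exp (- l1 * k1 t)) (exp (- l2 * k2 t))) at_top"
    using ev mono bracket[OF eq1 k1l k1n l1 d1(1,2)] bracket[OF eq2 k2l k2n l2 d2(1,2)]
  proof eventually_elim
    case (elim t)
    have "Phi t (1 - kk1 m1 t) (1 - kk2 (l2*(1-d2)) t) \<le> Phi t (exp (- l1 * k1 t)) (exp (- l2 * k2 t))"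
      using elim(2) elim(3,4) by (simp add: m1_def less_imp_le)
    thus ?case using elim(1) by linarith
  qed
next
  fix a assume a: "a > phi l1 l2"
  define e where "e = a - phi l1 l2"
  have e: "e > 0" using a by (simp add: e_def)
  obtain d1 where d1: "0 < d1" "d1 \<le> 1/2" "\<bar>phi (l1*(1+d1)) l2 - phi l1 l2\<bar> < e/2"
    using cont_pt[OF c1[rule_format, OF l2] l1, of "e/2"] e by auto
  define m1 where "m1 = l1*(1+d1)"
  have m1: "m1 > 0" using l1 d1 by (simp add: m1_def)
  obtain d2 where d2: "0 < d2" "d2 \<le> 1/2" "\<bar>phi m1 (l2*(1+d2)) - phi m1 l2\<bar> < e/2"
    using cont_pt[OF c2[rule_format, OF m1] l2, of "e/2"] e by auto
  have "phi m1 (l2*(1+d2)) < a" using d1(3) d2(3) unfolding m1_def e_def abs_less_iff by argo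
  moreover have "l2*(1+d2) > 0" using l2 d2 by simp
  ultimately have ev: "eventually (\<lambda>t. Phi t (1 - kk1 m1 t) (1 - kk2 (l2*(1+d2)) t) < a) at_top"
    using lim m1 by (intro order_tendstoD(2)) auto
  show "eventually (\<lambda>t. Phi t (exp (- l1 * k1 t)) (exp (- l2 * k2 t)) < a) at_top"
    using ev mono bracket[OF eq1 k1l k1n l1 d1(1,2)] bracket[OF eq2 k2l k2n l2 d2(1,2)]
  proof eventually_elim
    case (elim t)
    have "exp (- l1 * k1 t) \<le> 1" "exp (- l2 * k2 t) \<le> 1"
      using elim(3,4) by linarith+
    hence "Phi t (exp (- l1 * k1 t)) (exp (- l2 * k2 t)) \<le> Phi t (1 - kk1 m1 t) (1 - kk2 (l2*(1+d2)) t)"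
      using elim(2) elim(3,4) by (simp add: m1_def)
    thus ?case using elim(1) by linarith
  qed
qed

theorem lemma6:
  fixes G :: "nat \<Rightarrow> real measure" and xi :: "nat \<Rightarrow> (nat \<times> nat) pmf"
    and Z :: "nat \<Rightarrow> real \<Rightarrow> (nat \<times> nat) pmf"
    and H k1 k2 :: "real \<Rightarrow> real"
    and kk1 kk2 :: "real \<Rightarrow> real \<Rightarrow> real"
    and h :: "real \<Rightarrow> real \<Rightarrow> real \<times> real"
    and g :: "real \<Rightarrow> real \<times> real"
  assumes BH: "bellman_harris G xi Z"
    and H_nonneg: "\<And>t. t \<ge> 0 \<Longrightarrow> H t \<ge> 0"
    and k1_nonneg: "\<And>t. t \<ge> 0 \<Longrightarrow> k1 t \<ge> 0"
    and k2_nonneg: "\<And>t. t \<ge> 0 \<Longrightarrow> k2 t \<ge> 0"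
    and k1_lim: "(k1 \<longlongrightarrow> 0) at_top"
    and k2_lim: "(k2 \<longlongrightarrow> 0) at_top"
    and H_lim: "filterlim H at_top at_top"
  shows
    "((\<forall>lam1>0. (\<lambda>t. kk1 lam1 t) \<sim>[at_top] (\<lambda>t. lam1 * k1 t)) \<and>
      (\<forall>lam2>0. (\<lambda>t. kk2 lam2 t) \<sim>[at_top] (\<lambda>t. lam2 * k2 t)) \<and>
      (\<forall>lam1>0. \<forall>lam2>0. ((\<lambda>t. H t *\<^sub>R Qv Z t (1 - kk1 lam1 t) (1 - kk2 lam2 t))
                              \<longlongrightarrow> h lam1 lam2) at_top) \<and>
      (\<forall>lam2>0. continuous_on {0<..} (\<lambda>lam1. fst (h lam1 lam2))) \<and>
      (\<forall>lam2>0. continuous_on {0<..} (\<lambda>lam1. snd (h lam1 lam2))) \<and>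
      (\<forall>lam1>0. continuous_on {0<..} (\<lambda>lam2. fst (h lam1 lam2))) \<and>
      (\<forall>lam1>0. continuous_on {0<..} (\<lambda>lam2. snd (h lam1 lam2)))
      \<longrightarrow> (\<forall>lam1>0. \<forall>lam2>0.
             ((\<lambda>t. H t *\<^sub>R Qv Z t (exp (- lam1 * k1 t)) (exp (- lam2 * k2 t)))
                \<longlongrightarrow> h lam1 lam2) at_top))
     \<and>
     ((\<forall>lam2>0. (\<lambda>t. kk2 lam2 t) \<sim>[at_top] (\<lambda>t. lam2 * k2 t)) \<and>
      (\<forall>lam2>0. ((\<lambda>t. H t *\<^sub>R Qv Z t 1 (1 - kk2 lam2 t)) \<longlongrightarrow> g lam2) at_top) \<and>
      continuous_on {0<..} (\<lambda>lam2. fst (g lam2)) \<and>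
      continuous_on {0<..} (\<lambda>lam2. snd (g lam2))
      \<longrightarrow> (\<forall>lam2>0.
             ((\<lambda>t. H t *\<^sub>R Qv Z t 1 (exp (- lam2 * k2 t))) \<longlongrightarrow> g lam2) at_top))"
proof -
  have tnn: "eventually (\<lambda>t. (t::real) \<ge> 0) at_top" by (simp add: eventually_ge_at_top)
  have k1n: "eventually (\<lambda>t. k1 t \<ge> 0) at_top" using tnn by eventually_elim (rule k1_nonneg)
  have k2n: "eventually (\<lambda>t. k2 t \<ge> 0) at_top" using tnn by eventually_elim (rule k2_nonneg)
  have monoi: "eventually (\<lambda>t. \<forall>s1 s1' s2 s2'. 0 \<le> s1 \<longrightarrow> s1 \<le> s1' \<longrightarrow> s1' \<le> 1 \<longrightarrow>
        0 \<le> s2 \<longrightarrow> s2 \<le> s2' \<longrightarrow> s2' \<le> 1 \<longrightarrow>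
        H t * (1 - pgf2 (Z i t) s1' s2') \<le> H t * (1 - pgf2 (Z i t) s1 s2)) at_top" for i
    using tnn
  proof eventually_elim
    case (elim t)
    show ?case using H_nonneg[OF elim] by (auto intro!: mult_left_mono pgf2_mono)
  qed
  have fstQ: "fst (H t *\<^sub>R Qv Z t s1 s2) = H t * (1 - pgf2 (Z 1 t) s1 s2)" for t s1 s2
    by (simp add: Qv_def)
  have sndQ: "snd (H t *\<^sub>R Qv Z t s1 s2) = H t * (1 - pgf2 (Z 2 t) s1 s2)" for t s1 s2
    by (simp add: Qv_def)
  have pairI: "((\<lambda>t. F t) \<longlongrightarrow> L) at_top"
    if "((\<lambda>t. fst (F t)) \<longlongrightarrow> fst L) at_top" "((\<lambda>t. snd (F t)) \<longlongrightarrow> snd L) at_top"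
    for F :: "real \<Rightarrow> real \<times> real" and L
    using tendsto_Pair[OF that] by simp
  show ?thesis
  proof (intro conjI impI allI)
    fix lam1 lam2 :: real
    assume hyp: "(\<forall>lam1>0. (\<lambda>t. kk1 lam1 t) \<sim>[at_top] (\<lambda>t. lam1 * k1 t)) \<and>
      (\<forall>lam2>0. (\<lambda>t. kk2 lam2 t) \<sim>[at_top] (\<lambda>t. lam2 * k2 t)) \<and>
      (\<forall>lam1>0. \<forall>lam2>0. ((\<lambda>t. H t *\<^sub>R Qv Z t (1 - kk1 lam1 t) (1 - kk2 lam2 t))
                              \<longlongrightarrow> h lam1 lam2) at_top) \<and>
      (\<forall>lam2>0. continuous_on {0<..} (\<lambda>lam1. fst (h lam1 lam2))) \<and>
      (\<forall>lam2>0. continuous_on {0<..} (\<lambda>lam1. snd (h lam1 lam2))) \<and>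
      (\<forall>lam1>0. continuous_on {0<..} (\<lambda>lam2. fst (h lam1 lam2))) \<and>
      (\<forall>lam1>0. continuous_on {0<..} (\<lambda>lam2. snd (h lam1 lam2)))"
    assume l1: "lam1 > 0" and l2: "lam2 > 0"
    have lim: "((\<lambda>t. H t *\<^sub>R Qv Z t (1 - kk1 m1 t) (1 - kk2 m2 t)) \<longlongrightarrow> h m1 m2) at_top"
      if "m1 > 0" "m2 > 0" for m1 m2 using hyp that by blast
    have limf: "((\<lambda>t. H t * (1 - pgf2 (Z 1 t) (1 - kk1 m1 t) (1 - kk2 m2 t))) \<longlongrightarrow> fst (h m1 m2)) at_top"
      if "m1 > 0" "m2 > 0" for m1 m2 using tendsto_fst[OF lim[OF that]] unfolding fstQ .
    have lims: "((\<lambda>t. H t * (1 - pgf2 (Z 2 t) (1 - kk1 m1 t) (1 - kk2 m2 t))) \<longlongrightarrow> snd (h m1 m2)) at_top"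
      if "m1 > 0" "m2 > 0" for m1 m2 using tendsto_snd[OF lim[OF that]] unfolding sndQ .
    show "((\<lambda>t. H t *\<^sub>R Qv Z t (exp (- lam1 * k1 t)) (exp (- lam2 * k2 t))) \<longlongrightarrow> h lam1 lam2) at_top"
    proof (rule pairI)
      show "((\<lambda>t. fst (H t *\<^sub>R Qv Z t (exp (- lam1 * k1 t)) (exp (- lam2 * k2 t)))) \<longlongrightarrow> fst (h lam1 lam2)) at_top"
        unfolding fstQ
        by (rule sandwich2[where Phi="\<lambda>t s1 s2. H t * (1 - pgf2 (Z 1 t) s1 s2)" and phi="\<lambda>a b. fst (h a b)"
              , OF monoi _ _ k1_lim k2_lim k1n k2n _ _ _ l1 l2])
           (use hyp limf in auto)
      show "((\<lambda>t. snd (H t *\<^sub>R Qv Z t (exp (- lam1 * k1 t)) (exp (- lam2 * k2 t)))) \<longlongrightarrow> snd (h lam1 lam2)) at_top"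
        unfolding sndQ
        by (rule sandwich2[where Phi="\<lambda>t s1 s2. H t * (1 - pgf2 (Z 2 t) s1 s2)" and phi="\<lambda>a b. snd (h a b)"
              , OF monoi _ _ k1_lim k2_lim k1n k2n _ _ _ l1 l2])
           (use hyp lims in auto)
    qed
  next
    fix lam2 :: real
    assume hyp: "(\<forall>lam2>0. (\<lambda>t. kk2 lam2 t) \<sim>[at_top] (\<lambda>t. lam2 * k2 t)) \<and>
      (\<forall>lam2>0. ((\<lambda>t. H t *\<^sub>R Qv Z t 1 (1 - kk2 lam2 t)) \<longlongrightarrow> g lam2) at_top) \<and>
      continuous_on {0<..} (\<lambda>lam2. fst (g lam2)) \<and>
      continuous_on {0<..} (\<lambda>lam2. snd (g lam2))"
    assume l2: "lam2 > 0"
    have l1: "(1::real) > 0" by simp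
    have z0: "((\<lambda>t. 0::real) \<longlongrightarrow> 0) at_top" by simp
    have zn: "eventually (\<lambda>t. (0::real) \<ge> 0) at_top" by simp
    have zeq: "\<forall>mu>0. (\<lambda>t. (\<lambda>m t. 0::real) mu t) \<sim>[at_top] (\<lambda>t. mu * (\<lambda>t. 0) t)" by simp
    have lim: "((\<lambda>t. H t *\<^sub>R Qv Z t 1 (1 - kk2 m2 t)) \<longlongrightarrow> g m2) at_top"
      if "m2 > 0" for m2 using hyp that by blast
    have limf: "((\<lambda>t. H t * (1 - pgf2 (Z 1 t) (1 - (\<lambda>m t. 0) m1 t) (1 - kk2 m2 t))) \<longlongrightarrow> (\<lambda>a b. fst (g b)) m1 m2) at_top"
      if "m1 > 0" "m2 > 0" for m1 m2 :: real using tendsto_fst[OF lim[OF that(2)]] unfolding fstQ by simp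
    have lims: "((\<lambda>t. H t * (1 - pgf2 (Z 2 t) (1 - (\<lambda>m t. 0) m1 t) (1 - kk2 m2 t))) \<longlongrightarrow> (\<lambda>a b. snd (g b)) m1 m2) at_top"
      if "m1 > 0" "m2 > 0" for m1 m2 :: real using tendsto_snd[OF lim[OF that(2)]] unfolding sndQ by simp
    show "((\<lambda>t. H t *\<^sub>R Qv Z t 1 (exp (- lam2 * k2 t))) \<longlongrightarrow> g lam2) at_top"
    proof (rule pairI)
      have "((\<lambda>t. H t * (1 - pgf2 (Z 1 t) (exp (- 1 * (\<lambda>t. 0) t)) (exp (- lam2 * k2 t)))) \<longlongrightarrow> (\<lambda>a b. fst (g b)) 1 lam2) at_top"
        by (rule sandwich2[where Phi="\<lambda>t s1 s2. H t * (1 - pgf2 (Z 1 t) s1 s2)"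
              , OF monoi zeq _ z0 k2_lim zn k2n _ _ _ l1 l2])
           (use hyp limf in auto)
      thus "((\<lambda>t. fst (H t *\<^sub>R Qv Z t 1 (exp (- lam2 * k2 t)))) \<longlongrightarrow> fst (g lam2)) at_top"
        unfolding fstQ by simp
      have "((\<lambda>t. H t * (1 - pgf2 (Z 2 t) (exp (- 1 * (\<lambda>t. 0) t)) (exp (- lam2 * k2 t)))) \<longlongrightarrow> (\<lambda>a b. snd (g b)) 1 lam2) at_top"
        by (rule sandwich2[where Phi="\<lambda>t s1 s2. H t * (1 - pgf2 (Z 2 t) s1 s2)"
              , OF monoi zeq _ z0 k2_lim zn k2n _ _ _ l1 l2])
           (use hyp lims in auto)
      thus "((\<lambda>t. snd (H t *\<^sub>R Qv Z t 1 (exp (- lam2 * k2 t)))) \<longlongrightarrow> snd (g lam2)) at_top"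
        unfolding sndQ by simp
    qed
  qed
qed

end
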